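(* Let $\kappa$ be a cardinal and suppose there exists a family $\{N_\zeta:\zeta<\kappa\}$ of $\kappa$ pairwise almost disjoint subsets of $\mathfrak{c}$, each of cardinality $\mathfrak{c}$. Then the set $\mathcal{SZ}(\mathbb R)$ of Sierpi\'nski-Zygmund functions is strongly $\kappa$-algebrable in the algebra $\mathbb R^{\mathbb R}$.
   Context: $\mathfrak{c}$ denotes the cardinality of $\mathbb R$, identified with the first ordinal of that cardinality. Two subsets $A,B$ of $\mathfrak{c}$, each of cardinality $\mathfrak{c}$, are almost disjoint if $|A\cap B|<\mathfrak{c}$. A function $f:\mathbb R\to\mathbb R$ is a Sierpi\'nski-Zygmund function if for every set $Z\subset\mathbb R$ of cardinality $\mathfrak{c}$ the restriction $f|_Z$ is not a Borel map. $\mathbb R^{\mathbb R}$ is the commutative algebra of all functions $\mathbb R\to\mathbb R$ with pointwise operations. A subset $E$ of a commutative algebra $B$ is strongly $\kappa$-algebrable if there exists a $\kappa$-generated free algebra contained in $E\cup\{0\}$; equivalently, there is a set $X=\{x_\alpha:\alpha<\kappa\}\subset B$ (with $x_\alpha$ distinct) such that the set of all monomials $x_{\alpha_1}^{k_1}\cdots x_{\alpha_n}^{k_n}$ ($n\ge1$, distinct $\alpha_i$, $k_i\ge1$) is linearly independent and every nontrivial linear combination of such monomials lies in $E$ (i.e. for every nonzero polynomial $P$ without constant term and distinct $x_{\alpha_1},\dots,x_{\alpha_n}$, $P(x_{\alpha_1},\dots,x_{\alpha_n})$ is nonzero and belongs to $E$). *)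

theory Defs
  imports "HOL-Analysis.Analysis" "HOL-Library.Equipollence"
begin

definition SZ :: "(real \<Rightarrow> real) set" where
  "SZ = {f. \<forall>Z :: real set. eqpoll Z (UNIV :: real set) \<longrightarrow>
             f \<notin> measurable (restrict_space borel Z) borel}"

definition monomials :: "'k set \<Rightarrow> ('k \<Rightarrow> nat) set" where
  "monomials K = {m. finite {a. m a \<noteq> 0} \<and> {a. m a \<noteq> 0} \<subseteq> K \<and> m \<noteq> (\<lambda>_. 0)}"

definition eval_mono :: "('k \<Rightarrow> real \<Rightarrow> real) \<Rightarrow> ('k \<Rightarrow> nat) \<Rightarrow> real \<Rightarrow> real" where
  "eval_mono x m = (\<lambda>t. \<Prod>a\<in>{a. m a \<noteq> 0}. x a t ^ m a)"

text \<open>Real polynomials without constant term in the variables indexed by K,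
  represented by their finitely supported coefficient functions.\<close>
definition polys :: "'k set \<Rightarrow> (('k \<Rightarrow> nat) \<Rightarrow> real) set" where
  "polys K = {c. finite {m. c m \<noteq> 0} \<and> {m. c m \<noteq> 0} \<subseteq> monomials K}"

definition eval_poly :: "('k \<Rightarrow> real \<Rightarrow> real) \<Rightarrow> (('k \<Rightarrow> nat) \<Rightarrow> real) \<Rightarrow> real \<Rightarrow> real" where
  "eval_poly x c = (\<lambda>t. \<Sum>m\<in>{m. c m \<noteq> 0}. c m * eval_mono x m t)"

definition strongly_algebrable :: "(real \<Rightarrow> real) set \<Rightarrow> 'k set \<Rightarrow> bool" where
  "strongly_algebrable E K \<longleftrightarrow>
     (\<exists>x :: 'k \<Rightarrow> real \<Rightarrow> real. inj_on x K \<and>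
        (\<forall>c \<in> polys K. c \<noteq> (\<lambda>_. 0) \<longrightarrow> eval_poly x c \<noteq> (\<lambda>_. 0) \<and> eval_poly x c \<in> E))"

end

theory Submission imports Defs "HOL-Computational_Algebra.Polynomial" "HOL-Library.Countable_Set_Type"
begin
unbundle cardinal_syntax

abbreviation small :: "real set \<Rightarrow> bool" where
  "small S \<equiv> |S| <o |UNIV::real set|"

lemma infinite_reals: "\<not> finite (UNIV::real set)"
  by (simp add: infinite_UNIV_char_0)

lemma small_subset: "A \<subseteq> B \<Longrightarrow> small B \<Longrightarrow> small A"
  using card_of_mono1 ordLeq_ordLess_trans by blast

lemma small_Un: "small A \<Longrightarrow> small B \<Longrightarrow> small (A \<union> B)"
  using card_of_Un_ordLess_infinite infinite_reals by blast

lemma small_image_gen: "|A| <o |UNIV::real set| \<Longrightarrow> small (f ` A)"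
  using card_of_image ordLeq_ordLess_trans by blast

lemma small_finite: assumes "finite A" shows "small A"
proof (rule finite_ordLess_infinite)
  show "Well_order |A|" by (rule card_of_Well_order)
  show "Well_order |UNIV::real set|" by (rule card_of_Well_order)
  show "finite (Field |A| )" using assms by (simp add: Field_card_of)
  show "\<not> finite (Field |UNIV::real set| )" using infinite_reals by (simp add: Field_card_of)
qed

lemma small_UN_finite: "finite I \<Longrightarrow> (\<And>i. i \<in> I \<Longrightarrow> small (A i)) \<Longrightarrow> small (\<Union>i\<in>I. A i)"
  by (induction I rule: finite_induct) (auto simp: small_Un small_finite)

definition wr :: "real rel" where "wr = |UNIV::real set|"

lemma wr_field: "Field wr = UNIV"
  by (simp add: wr_def Field_card_of)
lemma wr_card: "Card_order wr"
  using card_of_Card_order[of "UNIV::real set"] by (simp add: wr_def Field_card_of)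

lemma wr_wo: "Well_order wr"
  using wr_card unfolding card_order_on_def by simp

lemma small_underS: "small (underS wr a)"
  using card_of_underS[OF wr_card] wr_field by (simp add: wr_def)

lemma small_under: "small (under wr a)"
proof -
  have "under wr a \<subseteq> underS wr a \<union> {a}" by (auto simp: under_def underS_def)
  thus ?thesis using small_Un small_finite small_underS small_subset by blast
qed

lemma small_not_all: "small S \<Longrightarrow> Z \<approx> (UNIV::real set) \<Longrightarrow> \<exists>z\<in>Z. z \<notin> S"
proof (rule ccontr)
  assume "small S" "Z \<approx> (UNIV::real set)" "\<not> (\<exists>z\<in>Z. z \<notin> S)"
  hence "Z \<subseteq> S" by auto
  hence "|Z| \<le>o |S|" by (rule card_of_mono1)
  moreover have "|UNIV::real set| =o |Z|" using \<open>Z \<approx> UNIV\<close>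
    by (simp add: eqpoll_iff_card_of_ordIso ordIso_symmetric)
  ultimately have "|UNIV::real set| \<le>o |S|" using ordIso_ordLeq_trans by blast
  thus False using \<open>small S\<close> not_ordLess_ordLeq by blast
qed

lemma wr_total: "(a,b) \<in> wr \<or> (b,a) \<in> wr"
  using wr_wo wr_field unfolding well_order_on_def linear_order_on_def total_on_def
  by (metis UNIV_I refl_onD partial_order_on_def preorder_on_def)

lemma wr_refl: "(a,a) \<in> wr"
  using wr_total by blast

lemma wr_trans: "(a,b) \<in> wr \<Longrightarrow> (b,c) \<in> wr \<Longrightarrow> (a,c) \<in> wr"
  using wr_wo unfolding well_order_on_def linear_order_on_def partial_order_on_def preorder_on_def
  by (meson transD)

lemma wr_antisym: "(a,b) \<in> wr \<Longrightarrow> (b,a) \<in> wr \<Longrightarrow> a = b"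
  using wr_wo unfolding well_order_on_def linear_order_on_def partial_order_on_def
  by (meson antisymD)

lemma wr_max: "finite S \<Longrightarrow> S \<noteq> {} \<Longrightarrow> \<exists>a\<in>S. \<forall>b\<in>S. (b,a) \<in> wr"
proof (induction S rule: finite_ne_induct)
  case (singleton x) thus ?case using wr_refl by auto
next
  case (insert x F)
  then obtain a where a: "a \<in> F" "\<forall>b\<in>F. (b,a) \<in> wr" by blast
  show ?case
  proof (cases "(x,a) \<in> wr")
    case True thus ?thesis using a by auto
  next
    case False
    hence "(a,x) \<in> wr" using wr_total by blast
    thus ?thesis using a wr_trans wr_refl by blast
  qed
qed

lemma countable_small: "countable A \<Longrightarrow> small A"
proof -
  assume "countable A"
  hence 1: "|A| \<le>o |UNIV::nat set|" by (simp add: countable_card_of_nat)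
  have "\<not> |UNIV::real set| \<le>o |UNIV::nat set|"
    using uncountable_UNIV_real countable_card_of_nat by blast
  hence "|UNIV::nat set| <o |UNIV::real set|"
    by (simp add: not_ordLeq_iff_ordLess card_of_Well_order)
  thus ?thesis using 1 ordLeq_ordLess_trans by blast
qed

lemma lesspoll_small: "A \<prec> (UNIV::real set) \<Longrightarrow> small A"
proof -
  assume a: "A \<prec> (UNIV::real set)"
  show "small A"
  proof (rule ccontr)
    assume "\<not> small A"
    hence "|UNIV::real set| \<le>o |A|" by (simp add: not_ordLess_iff_ordLeq card_of_Well_order)
    moreover have "|A| \<le>o |UNIV::real set|" by (simp add: card_of_mono1)
    ultimately have "A \<approx> (UNIV::real set)"
      by (simp add: eqpoll_iff_card_of_ordIso ordIso_iff_ordLeq)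
    thus False using a by (simp add: lesspoll_def)
  qed
qed

section \<open>Subrings generated by a set\<close>

primrec Rn :: "real set \<Rightarrow> nat \<Rightarrow> real set" where
  "Rn X 0 = X \<union> range real_of_int"
| "Rn X (Suc n) = Rn X n \<union> (\<lambda>p. fst p + snd p) ` (Rn X n \<times> Rn X n)
     \<union> (\<lambda>p. fst p * snd p) ` (Rn X n \<times> Rn X n)"

definition Rg :: "real set \<Rightarrow> real set" where "Rg X = (\<Union>n. Rn X n)"

lemma Rn_Suc_mono: "Rn X n \<subseteq> Rn X (Suc n)" by auto

lemma Rn_mono: "m \<le> n \<Longrightarrow> Rn X m \<subseteq> Rn X n"
  by (rule lift_Suc_mono_le[of "Rn X"]) (auto simp: Rn_Suc_mono)

lemma Rg_add: assumes "a \<in> Rg X" "b \<in> Rg X" shows "a + b \<in> Rg X"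
proof -
  obtain m n where "a \<in> Rn X m" "b \<in> Rn X n" using assms by (auto simp: Rg_def)
  hence "a \<in> Rn X (max m n)" "b \<in> Rn X (max m n)" using Rn_mono by (meson max.cobounded1 max.cobounded2 subsetD)+
  hence "a + b \<in> (\<lambda>p. fst p + snd p) ` (Rn X (max m n) \<times> Rn X (max m n))"
    by (intro image_eqI[of _ _ "(a,b)"]) auto
  hence "a + b \<in> Rn X (Suc (max m n))" by simp
  thus ?thesis unfolding Rg_def by blast
qed

lemma Rg_mult: assumes "a \<in> Rg X" "b \<in> Rg X" shows "a * b \<in> Rg X"
proof -
  obtain m n where "a \<in> Rn X m" "b \<in> Rn X n" using assms by (auto simp: Rg_def)
  hence "a \<in> Rn X (max m n)" "b \<in> Rn X (max m n)" using Rn_mono by (meson max.cobounded1 max.cobounded2 subsetD)+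
  hence "a * b \<in> (\<lambda>p. fst p * snd p) ` (Rn X (max m n) \<times> Rn X (max m n))"
    by (intro image_eqI[of _ _ "(a,b)"]) auto
  hence "a * b \<in> Rn X (Suc (max m n))" by simp
  thus ?thesis unfolding Rg_def by blast
qed

lemma Rg_base: "x \<in> X \<Longrightarrow> x \<in> Rg X"
  by (auto simp: Rg_def intro!: exI[of _ 0])

lemma Rg_int: "real_of_int i \<in> Rg X"
  unfolding Rg_def by (rule UN_I[of 0]) auto

lemma Rg_0: "0 \<in> Rg X" using Rg_int[of 0] by simp
lemma Rg_1: "1 \<in> Rg X" using Rg_int[of 1] by simp

lemma Rg_uminus: "a \<in> Rg X \<Longrightarrow> - a \<in> Rg X"
  using Rg_mult[OF Rg_int[of "-1"]] by simp

lemma Rn_mono_set: "X \<subseteq> Y \<Longrightarrow> Rn X n \<subseteq> Rn Y n"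
  by (induction n) (auto 0 4)

lemma Rg_mono: "X \<subseteq> Y \<Longrightarrow> Rg X \<subseteq> Rg Y"
  unfolding Rg_def using Rn_mono_set by blast

lemma Rg_sum: "finite S \<Longrightarrow> (\<And>i. i \<in> S \<Longrightarrow> f i \<in> Rg X) \<Longrightarrow> sum f S \<in> Rg X"
  by (induction S rule: finite_induct) (auto simp: Rg_0 Rg_add)

lemma Rg_prod: "finite S \<Longrightarrow> (\<And>i. i \<in> S \<Longrightarrow> f i \<in> Rg X) \<Longrightarrow> prod f S \<in> Rg X"
  by (induction S rule: finite_induct) (auto simp: Rg_1 Rg_mult)

lemma Rg_power: "a \<in> Rg X \<Longrightarrow> a ^ n \<in> Rg X"
  by (induction n) (auto simp: Rg_1 Rg_mult)

lemma Rg_infinite: "\<not> finite (Rg X)"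
proof
  assume "finite (Rg X)"
  moreover have "range real_of_int \<subseteq> Rg X" using Rg_int by auto
  ultimately have "finite (range real_of_int)" using finite_subset by blast
  moreover have "inj real_of_int" by (auto simp: inj_on_def)
  ultimately show False using finite_imageD by fastforce
qed

lemma Rg_small: assumes "small X" shows "small (Rg X)"
proof -
  let ?B = "Rn X 0"
  have infB: "\<not> finite ?B"
  proof
    assume "finite ?B"
    hence "finite (range real_of_int)" by (simp add: finite_Un)
    moreover have "inj real_of_int" by (auto simp: inj_on_def)
    ultimately show False using finite_imageD by fastforce
  qed
  have fB: "\<not> finite (Field |?B| )" using infB by (simp add: Field_card_of)
  have cB: "Card_order |?B|" by (rule card_of_Card_order)
  have le: "|Rn X n| \<le>o |?B|" for n
  proof (induction n)
    case 0 thus ?case by (simp add: ordLeq_refl[OF card_of_Card_order])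
  next
    case (Suc n)
    have t: "|Rn X n \<times> Rn X n| \<le>o |?B|"
      using card_of_Times_ordLeq_infinite_Field[OF fB Suc Suc cB] .
    have i1: "|(\<lambda>p. fst p + snd p) ` (Rn X n \<times> Rn X n)| \<le>o |?B|"
      using card_of_image t ordLeq_transitive by blast
    have i2: "|(\<lambda>p. fst p * snd p) ` (Rn X n \<times> Rn X n)| \<le>o |?B|"
      using card_of_image t ordLeq_transitive by blast
    show ?case
      using card_of_Un_ordLeq_infinite_Field[OF fB card_of_Un_ordLeq_infinite_Field[OF fB Suc i1 cB] i2 cB]
      by simp
  qed
  have "|Rg X| \<le>o |?B|" unfolding Rg_def
    by (rule card_of_UNION_ordLeq_infinite[OF infB]) (use infB infinite_iff_card_of_nat le in auto)
  moreover have "small ?B"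
    using small_Un[OF assms countable_small[of "range real_of_int"]] by simp
  ultimately show ?thesis using ordLeq_ordLess_trans by blast
qed

section \<open>Roots of polynomials over a set\<close>

definition roots_in :: "real set \<Rightarrow> real set" where
  "roots_in R = {z. \<exists>p::real poly. p \<noteq> 0 \<and> (\<forall>k. coeff p k \<in> R) \<and> poly p z = 0}"

definition Pd :: "real set \<Rightarrow> nat \<Rightarrow> real poly set" where
  "Pd R n = {p. (\<forall>k. coeff p k \<in> R) \<and> degree p \<le> n}"

lemma Pd_Suc: "Pd R (Suc n) \<subseteq> (\<lambda>x. pCons (fst x) (snd x)) ` (R \<times> Pd R n)"
proof
  fix p assume p: "p \<in> Pd R (Suc n)"
  obtain a q where pq: "p = pCons a q" by (cases p) auto
  have "a \<in> R" using p pq by (auto simp: Pd_def dest: spec[of _ 0])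
  moreover have "\<forall>k. coeff q k \<in> R" using p pq by (auto simp: Pd_def dest: spec[of _ "Suc k" for k])
  moreover have "degree q \<le> n" using p pq by (auto simp: Pd_def split: if_splits)
  ultimately show "p \<in> (\<lambda>x. pCons (fst x) (snd x)) ` (R \<times> Pd R n)"
    using pq by (auto simp: Pd_def intro!: image_eqI[of _ _ "(a,q)"])
qed

lemma Pd_0: "Pd R 0 \<subseteq> (\<lambda>a. [:a:]) ` R"
proof
  fix p assume p: "p \<in> Pd R 0"
  hence d: "degree p = 0" by (auto simp: Pd_def)
  have "p = [:coeff p 0:]"
  proof (rule poly_eqI)
    fix n show "coeff p n = coeff [:coeff p 0:] n"
      using d by (cases n) (auto intro: coeff_eq_0)
  qed
  moreover have "coeff p 0 \<in> R" using p by (auto simp: Pd_def)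
  ultimately show "p \<in> (\<lambda>a. [:a:]) ` R" by blast
qed

lemma roots_small: assumes "small R" "\<not> finite R" shows "small (roots_in R)"
proof -
  have fB: "\<not> finite (Field |R| )" using assms by (simp add: Field_card_of)
  have cB: "Card_order |R|" by (rule card_of_Card_order)
  have le: "|Pd R n| \<le>o |R|" for n
  proof (induction n)
    case 0 thus ?case using card_of_mono1[OF Pd_0] card_of_image ordLeq_transitive by blast
  next
    case (Suc n)
    have c1: "|R \<times> Pd R n| \<le>o |R|"
      using card_of_Times_ordLeq_infinite_Field[OF fB ordLeq_refl[OF card_of_Card_order] Suc cB] by simp
    have c2: "|Pd R (Suc n)| \<le>o |(\<lambda>x. pCons (fst x) (snd x)) ` (R \<times> Pd R n)|"
      by (rule card_of_mono1[OF Pd_Suc])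
    have c3: "|(\<lambda>x. pCons (fst x) (snd x)) ` (R \<times> Pd R n)| \<le>o |R \<times> Pd R n|"
      by (rule card_of_image)
    show ?case by (rule ordLeq_transitive[OF ordLeq_transitive[OF c2 c3] c1])
  qed
  have nat: "|UNIV::nat set| \<le>o |R|" using assms infinite_iff_card_of_nat by blast
  have P: "|\<Union>n. Pd R n| \<le>o |R|"
    by (rule card_of_UNION_ordLeq_infinite[OF assms(2) nat]) (use le in auto)
  have sub: "roots_in R \<subseteq> (\<Union>p\<in>(\<Union>n. Pd R n) - {0}. {z. poly p z = 0})"
    by (auto simp: roots_in_def Pd_def)
  have "|(\<Union>p\<in>(\<Union>n. Pd R n) - {0}. {z. poly p z = 0})| \<le>o |R|"
  proof (rule card_of_UNION_ordLeq_infinite[OF assms(2)])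
    show "|(\<Union>n. Pd R n) - {0}| \<le>o |R|"
      using P card_of_mono1[of "(\<Union>n. Pd R n) - {0}"] ordLeq_transitive by blast
    show "\<forall>p\<in>(\<Union>n. Pd R n) - {0}. |{z. poly p z = 0}| \<le>o |R|"
    proof
      fix p assume "p \<in> (\<Union>n. Pd R n) - {0}"
      hence fin: "finite {z. poly p z = 0}" using poly_roots_finite by blast
      have "|{z. poly p z = 0}| <o |R|"
        by (rule finite_ordLess_infinite[OF card_of_Well_order card_of_Well_order])
          (use assms(2) fin in \<open>simp_all add: Field_card_of\<close>)
      thus "|{z. poly p z = 0}| \<le>o |R|" by (rule ordLess_imp_ordLeq)
    qed
  qed
  thus ?thesis using card_of_mono1[OF sub] assms(1) ordLeq_transitive ordLeq_ordLess_trans by blast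
qed

lemma transc:
  assumes z: "z \<notin> roots_in R" and R0: "0 \<in> R" and q: "\<And>k. k < N \<Longrightarrow> q k \<in> R"
    and eq: "(\<Sum>k<N. q k * z ^ k) = 0"
  shows "\<forall>k<N. q k = 0"
proof -
  define p where "p = (\<Sum>k<N. monom (q k) k)"
  have cp: "coeff p j = (if j < N then q j else 0)" for j
    by (simp add: p_def coeff_sum)
  have "poly p z = 0" using eq by (simp add: p_def poly_sum poly_monom)
  moreover have "\<forall>k. coeff p k \<in> R" using cp q R0 by auto
  ultimately have "p = 0" using z by (auto simp: roots_in_def)
  thus ?thesis using cp by (metis coeff_0)
qed


section \<open>The algebraic independence lemma\<close>

lemma underS_wr_iff: "x \<in> underS wr y \<longleftrightarrow> (x,y) \<in> wr \<and> x \<noteq> y"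
  by (auto simp: underS_def)

lemma crux:
  fixes \<Phi> :: "real \<Rightarrow> real" and X0 :: "real set" and \<rho> :: "'k \<Rightarrow> real"
  assumes T: "\<And>y. \<Phi> y \<notin> roots_in (Rg (X0 \<union> \<Phi> ` underS wr y))"
  shows "finite V \<Longrightarrow> inj_on \<rho> V \<Longrightarrow> finite M \<Longrightarrow> (\<forall>m\<in>M. \<forall>b. m b \<noteq> 0 \<longrightarrow> b \<in> V)
    \<Longrightarrow> (\<forall>m\<in>M. c m \<in> Rg X0)
    \<Longrightarrow> (\<Sum>m\<in>M. c m * (\<Prod>b\<in>V. \<Phi> (\<rho> b) ^ m b)) = 0 \<Longrightarrow> \<forall>m\<in>M. c m = 0"
proof (induction "card V" arbitrary: V M c rule: less_induct)
  case less
  note fV = less.prems(1) and inj = less.prems(2) and fM = less.prems(3) and supp = less.prems(4)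
    and cR = less.prems(5) and eq = less.prems(6)
  show ?case
  proof (cases "V = {}")
    case True
    hence M0: "\<forall>m\<in>M. m = (\<lambda>_. 0)" using supp by auto
    show ?thesis
    proof (cases "M = {}")
      case False
      then obtain m0 where "m0 \<in> M" by blast
      moreover have "M \<subseteq> {\<lambda>_. 0}" using M0 by auto
      ultimately have "M = {\<lambda>_. 0}" by (metis subset_singletonD empty_iff)
      thus ?thesis using eq True by simp
    qed simp
  next
    case False
    obtain y where y: "y \<in> \<rho> ` V" "\<forall>b\<in>\<rho> ` V. (b,y) \<in> wr"
      using wr_max[of "\<rho> ` V"] fV False by auto
    then obtain a where a: "a \<in> V" "y = \<rho> a" by blast
    define V' where "V' = V - {a}"
    have fV': "finite V'" using fV by (simp add: V'_def)
    have cardV': "card V' < card V" unfolding V'_def by (rule card_Diff1_less[OF fV a(1)])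
    have injV': "inj_on \<rho> V'" using inj by (simp add: V'_def inj_on_diff)
    have below: "\<rho> b \<in> underS wr (\<rho> a)" if "b \<in> V'" for b
    proof -
      have "b \<in> V" "b \<noteq> a" using that by (auto simp: V'_def)
      hence "\<rho> b \<noteq> \<rho> a" using inj a by (auto dest: inj_onD)
      thus ?thesis using y a \<open>b \<in> V\<close> by (auto simp: underS_wr_iff)
    qed
    define z where "z = \<Phi> (\<rho> a)"
    define Rb where "Rb = Rg (X0 \<union> \<Phi> ` underS wr (\<rho> a))"
    have zT: "z \<notin> roots_in Rb" using T by (simp add: z_def Rb_def)
    have cRb: "c m \<in> Rb" if "m \<in> M" for m
      using cR that Rg_mono[of X0 "X0 \<union> \<Phi> ` underS wr (\<rho> a)"] by (auto simp: Rb_def)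
    have PhiRb: "\<Phi> (\<rho> b) \<in> Rb" if "b \<in> V'" for b
      using below[OF that] by (auto simp: Rb_def intro!: Rg_base)
    define D where "D = (\<lambda>m. m a) ` M"
    have fD: "finite D" using fM by (simp add: D_def)
    define q where "q k = (\<Sum>m\<in>{m\<in>M. m a = k}. c m * (\<Prod>b\<in>V'. \<Phi> (\<rho> b) ^ m b))" for k
    have qR: "q k \<in> Rb" for k
      unfolding q_def using fM fV' cRb PhiRb unfolding Rb_def
      by (intro Rg_sum Rg_mult Rg_prod Rg_power) auto
    have prodsplit: "(\<Prod>b\<in>V. \<Phi> (\<rho> b) ^ m b) = z ^ m a * (\<Prod>b\<in>V'. \<Phi> (\<rho> b) ^ m b)" for m
      using fV a by (simp add: V'_def z_def prod.remove)
    have "(\<Sum>m\<in>M. c m * (\<Prod>b\<in>V. \<Phi> (\<rho> b) ^ m b))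
        = (\<Sum>m\<in>M. z ^ m a * (c m * (\<Prod>b\<in>V'. \<Phi> (\<rho> b) ^ m b)))"
      by (simp add: prodsplit mult.commute mult.left_commute)
    also have "\<dots> = (\<Sum>k\<in>D. (\<Sum>m\<in>{m\<in>M. m a = k}. z ^ m a * (c m * (\<Prod>b\<in>V'. \<Phi> (\<rho> b) ^ m b))))"
      by (rule sum.group[OF fM fD, symmetric]) (simp add: D_def)
    also have "\<dots> = (\<Sum>k\<in>D. q k * z ^ k)"
      unfolding q_def by (intro sum.cong refl) (auto simp: sum_distrib_left mult.commute intro!: sum.cong)
    finally have eqD: "(\<Sum>k\<in>D. q k * z ^ k) = 0" using eq by simp
    obtain N where N: "D \<subseteq> {..<N}" using fD finite_nat_iff_bounded by blast
    define q' where "q' k = (if k \<in> D then q k else 0)" for k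
    have "(\<Sum>k<N. q' k * z ^ k) = (\<Sum>k\<in>D. q' k * z ^ k)"
      by (rule sum.mono_neutral_right) (use N in \<open>auto simp: q'_def\<close>)
    also have "\<dots> = (\<Sum>k\<in>D. q k * z ^ k)" by (rule sum.cong) (auto simp: q'_def)
    finally have "(\<Sum>k<N. q' k * z ^ k) = (\<Sum>k\<in>D. q k * z ^ k)" .
    hence "(\<Sum>k<N. q' k * z ^ k) = 0" using eqD by simp
    moreover have "0 \<in> Rb" by (simp add: Rb_def Rg_0)
    ultimately have q'0: "\<forall>k<N. q' k = 0"
      using transc[OF zT, of N q'] qR by (auto simp: q'_def)
    have qk0: "q k = 0" if "k \<in> D" for k
      using q'0 that N by (auto simp: q'_def)
    show ?thesis
    proof
      fix m assume mM: "m \<in> M"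
      define k where "k = m a"
      have kD: "k \<in> D" using mM by (simp add: D_def k_def)
      define Mk where "Mk = {m\<in>M. m a = k}"
      define M' where "M' = (\<lambda>m. m(a:=0)) ` Mk"
      define c' where "c' m' = c (m'(a:=k))" for m'
      have injMk: "inj_on (\<lambda>m. m(a:=0)) Mk"
      proof (rule inj_onI)
        fix m1 m2 assume "m1 \<in> Mk" "m2 \<in> Mk" "m1(a:=0) = m2(a:=0)"
        thus "m1 = m2" by (auto simp: Mk_def fun_eq_iff) (metis fun_upd_apply)
      qed
      have c'eq: "c' (m1(a:=0)) = c m1" if "m1 \<in> Mk" for m1
        using that by (clarsimp simp: c'_def Mk_def)
      have fM': "finite M'" using fM by (simp add: M'_def Mk_def)
      have suppM': "\<forall>m\<in>M'. \<forall>b. m b \<noteq> 0 \<longrightarrow> b \<in> V'"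
        using supp by (auto simp: M'_def Mk_def V'_def)
      have cR': "\<forall>m\<in>M'. c' m \<in> Rg X0"
        using cR c'eq by (auto simp: M'_def Mk_def)
      have prodeq: "(\<Prod>b\<in>V'. \<Phi> (\<rho> b) ^ (m1(a:=0)) b) = (\<Prod>b\<in>V'. \<Phi> (\<rho> b) ^ m1 b)" for m1
        by (intro prod.cong) (auto simp: V'_def)
      have "(\<Sum>m'\<in>M'. c' m' * (\<Prod>b\<in>V'. \<Phi> (\<rho> b) ^ m' b))
          = (\<Sum>m\<in>Mk. c' (m(a:=0)) * (\<Prod>b\<in>V'. \<Phi> (\<rho> b) ^ (m(a:=0)) b))"
        unfolding M'_def by (rule sum.reindex[OF injMk, unfolded comp_def])
      also have "\<dots> = (\<Sum>m\<in>Mk. c m * (\<Prod>b\<in>V'. \<Phi> (\<rho> b) ^ m b))"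
        by (rule sum.cong[OF refl]) (metis c'eq prodeq)
      also have "\<dots> = q k" by (simp add: q_def Mk_def)
      finally have "(\<Sum>m'\<in>M'. c' m' * (\<Prod>b\<in>V'. \<Phi> (\<rho> b) ^ m' b)) = q k" .
      hence eq': "(\<Sum>m'\<in>M'. c' m' * (\<Prod>b\<in>V'. \<Phi> (\<rho> b) ^ m' b)) = 0" using qk0[OF kD] by simp
      have "\<forall>m'\<in>M'. c' m' = 0"
        using less.hyps[OF cardV' fV' injV' fM' suppM' cR' eq'] .
      moreover have "m(a:=0) \<in> M'" using mM by (simp add: M'_def Mk_def k_def)
      ultimately show "c m = 0" using c'eq[of m] mM by (simp add: Mk_def k_def)
    qed
  qed
qed

section \<open>Construction of a transcendental-sequence along wr\<close>

definition step :: "real set \<Rightarrow> (real \<Rightarrow> real) \<Rightarrow> real \<Rightarrow> real" where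
  "step X0 F y = (SOME z. z \<notin> roots_in (Rg (X0 \<union> F ` underS wr y)))"

definition PhiC :: "real set \<Rightarrow> real \<Rightarrow> real" where
  "PhiC X0 = wfrec (wr - Id) (step X0)"

lemma wf_wr: "wf (wr - Id)"
  using wr_wo by (simp add: well_order_on_def)

lemma PhiC_T: assumes "small X0"
  shows "PhiC X0 y \<notin> roots_in (Rg (X0 \<union> PhiC X0 ` underS wr y))"
proof -
  have "PhiC X0 y = step X0 (cut (PhiC X0) (wr - Id) y) y"
    unfolding PhiC_def by (rule wfrec[OF wf_wr])
  moreover have "cut (PhiC X0) (wr - Id) y ` underS wr y = PhiC X0 ` underS wr y"
    by (intro image_cong refl) (auto simp: cut_apply underS_wr_iff)
  ultimately have eq: "PhiC X0 y = (SOME z. z \<notin> roots_in (Rg (X0 \<union> PhiC X0 ` underS wr y)))"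
    by (simp add: step_def)
  have "small (X0 \<union> PhiC X0 ` underS wr y)"
    using small_Un[OF assms small_image_gen[OF small_underS]] .
  hence "small (roots_in (Rg (X0 \<union> PhiC X0 ` underS wr y)))"
    using roots_small Rg_small Rg_infinite by blast
  hence "\<exists>z. z \<notin> roots_in (Rg (X0 \<union> PhiC X0 ` underS wr y))"
    using small_not_all[of _ UNIV] by blast
  thus ?thesis unfolding eq by (rule someI_ex)
qed

section \<open>Borel codes\<close>

datatype bc = BE | BL nat | BC bc | BU "nat \<Rightarrow> bc"

primrec interp :: "bc \<Rightarrow> real set" where
  "interp BE = {}"
| "interp (BL n) = {..< of_rat (from_nat n :: rat)}"
| "interp (BC c) = - interp c"
| "interp (BU f) = (\<Union>i. interp (f i))"

lemma borel_coded: assumes "B \<in> sets (borel :: real measure)" shows "\<exists>c. interp c = B"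
proof -
  have "sets (borel :: real measure) = sigma_sets UNIV (range lessThan)"
    by (subst borel_Iio) (simp add: sets_measure_of)
  hence "B \<in> sigma_sets UNIV (range lessThan)" using assms by simp
  thus ?thesis
  proof (induction rule: sigma_sets.induct)
    case (Basic a)
    then obtain x :: real where x: "a = {..<x}" by blast
    let ?c = "BU (\<lambda>i. if of_rat (from_nat i :: rat) < x then BL i else BE)"
    have "interp ?c = {..<x}"
    proof (intro set_eqI iffI)
      fix t assume "t \<in> interp ?c"
      thus "t \<in> {..<x}" by (auto split: if_splits)
    next
      fix t assume "t \<in> {..<x}"
      then obtain r where r: "t < of_rat r" "of_rat r < x" using of_rat_dense by auto
      show "t \<in> interp ?c"
        using r by (auto intro!: exI[of _ "to_nat r"])
    qed
    thus ?case using x by blast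
  next
    case Empty show ?case by (rule exI[of _ BE]) simp
  next
    case (Compl a)
    then obtain c where "interp c = a" by blast
    thus ?case by (intro exI[of _ "BC c"]) auto
  next
    case (Union a)
    then obtain f where "\<And>i. interp (f i) = a i" by metis
    thus ?case by (intro exI[of _ "BU f"]) auto
  qed
qed

definition gcode :: "(nat \<Rightarrow> bc) \<Rightarrow> real \<Rightarrow> real" where
  "gcode \<phi> t = Inf {of_rat (from_nat n :: rat) | n. t \<in> interp (\<phi> n)}"

lemma Inf_rats_above: "Inf {of_rat q | q. x < of_rat q} = (x::real)"
proof -
  let ?S = "{of_rat q | q. x < of_rat q} :: real set"
  obtain q0 where "x < of_rat q0" "of_rat q0 < x + 1" using of_rat_dense[of x "x+1"] by auto
  hence ne: "?S \<noteq> {}" by blast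
  have bdd: "bdd_below ?S" by (rule bdd_belowI[of _ x]) auto
  have "x \<le> Inf ?S" by (rule cInf_greatest[OF ne]) auto
  moreover have "\<not> x < Inf ?S"
  proof
    assume "x < Inf ?S"
    then obtain r where r: "x < of_rat r" "of_rat r < Inf ?S" using of_rat_dense by blast
    hence "Inf ?S \<le> of_rat r" by (intro cInf_lower[OF _ bdd]) auto
    thus False using r by simp
  qed
  ultimately show ?thesis by simp
qed

lemma extend:
  assumes f: "f \<in> measurable (restrict_space borel Z) borel"
  shows "\<exists>\<phi>. \<forall>t\<in>Z. f t = gcode \<phi> t"
proof -
  have "\<exists>c. \<forall>t\<in>Z. (t \<in> interp c \<longleftrightarrow> f t < of_rat (from_nat n :: rat))" for n
  proof -
    have "f -` {..< of_rat (from_nat n :: rat)} \<inter> space (restrict_space borel Z) \<in> sets (restrict_space borel Z)"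
      by (rule measurable_sets[OF f]) simp
    then obtain B where B: "B \<in> sets (borel :: real measure)"
      "f -` {..< of_rat (from_nat n :: rat)} \<inter> Z = Z \<inter> B"
      by (auto simp: sets_restrict_space space_restrict_space)
    obtain c where "interp c = B" using borel_coded[OF B(1)] by blast
    thus ?thesis using B(2) by (intro exI[of _ c]) blast
  qed
  then obtain \<phi> where \<phi>: "\<And>n. \<forall>t\<in>Z. (t \<in> interp (\<phi> n) \<longleftrightarrow> f t < of_rat (from_nat n :: rat))"
    by metis
  have "f t = gcode \<phi> t" if t: "t \<in> Z" for t
  proof -
    have "{of_rat (from_nat n :: rat) | n. t \<in> interp (\<phi> n)} = ({of_rat q | q. f t < of_rat q} :: real set)"
    proof (intro set_eqI iffI)
      fix v :: real assume "v \<in> {of_rat (from_nat n :: rat) | n. t \<in> interp (\<phi> n)}"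
      thus "v \<in> {of_rat q | q. f t < of_rat q}" using \<phi> t by blast
    next
      fix v :: real assume "v \<in> {of_rat q | q. f t < of_rat q}"
      then obtain q where q: "v = of_rat q" "f t < of_rat q" by blast
      have "t \<in> interp (\<phi> (to_nat q))" using \<phi> t q by simp
      thus "v \<in> {of_rat (from_nat n :: rat) | n. t \<in> interp (\<phi> n)}"
        using q by (intro CollectI exI[of _ "to_nat q"]) simp
    qed
    thus ?thesis by (simp add: gcode_def Inf_rats_above)
  qed
  thus ?thesis by blast
qed

primrec enc :: "bc \<Rightarrow> nat list \<Rightarrow> nat" where
  "enc BE = (\<lambda>p. if p = [] then 1 else 0)"
| "enc (BL n) = (\<lambda>p. if p = [] then n + 3 else 0)"
| "enc (BC c) = (\<lambda>p. case p of [] \<Rightarrow> 2 | i # q \<Rightarrow> enc c q)"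
| "enc (BU f) = (\<lambda>p. case p of [] \<Rightarrow> 0 | i # q \<Rightarrow> enc (f i) q)"

lemma enc_inj: "enc c = enc d \<Longrightarrow> c = d"
proof (induction c arbitrary: d)
  case BE thus ?case by (cases d) (auto simp: fun_eq_iff dest: spec[of _ "[]"])
next
  case (BL n) thus ?case by (cases d) (auto simp: fun_eq_iff dest: spec[of _ "[]"])
next
  case (BC c)
  note IH = BC.IH and pr = BC.prems
  show ?case
  proof (cases d)
    case (BC d')
    have "enc c = enc d'"
    proof
      fix q have "enc (BC c) (0 # q) = enc d (0 # q)" using pr by simp
      thus "enc c q = enc d' q" using BC by simp
    qed
    thus ?thesis using IH BC by simp
  qed (use pr in \<open>auto simp: fun_eq_iff dest: spec[of _ "[]"]\<close>)
next
  case (BU f)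
  note IH = BU.IH and pr = BU.prems
  show ?case
  proof (cases d)
    case (BU g)
    have "f i = g i" for i
    proof -
      have "enc (f i) = enc (g i)"
      proof
        fix q have "enc (BU f) (i # q) = enc d (i # q)" using pr by simp
        thus "enc (f i) q = enc (g i) q" using BU by simp
      qed
      thus ?thesis using IH by blast
    qed
    thus ?thesis using BU by auto
  qed (use pr in \<open>auto simp: fun_eq_iff dest: spec[of _ "[]"]\<close>)
qed

definition Fenc :: "(nat \<Rightarrow> bc) \<Rightarrow> nat list \<Rightarrow> nat" where
  "Fenc \<phi> p = (case p of [] \<Rightarrow> 0 | i # q \<Rightarrow> enc (\<phi> i) q)"

definition encs :: "(nat \<Rightarrow> bc) \<Rightarrow> nat set" where
  "encs \<phi> = range (\<lambda>p. to_nat (p, Fenc \<phi> p))"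

lemma encs_inj: "inj encs"
proof (rule injI)
  fix \<phi> \<psi> assume e: "encs \<phi> = encs \<psi>"
  let ?F = "Fenc"
  have F: "?F \<phi> p = ?F \<psi> p" for p
  proof -
    have "to_nat (p, ?F \<phi> p) \<in> encs \<psi>" using e by (auto simp: encs_def)
    then obtain p' where "to_nat (p, ?F \<phi> p) = to_nat (p', ?F \<psi> p')" by (auto simp: encs_def)
    hence "(p, ?F \<phi> p) = (p', ?F \<psi> p')" by (rule injD[OF inj_to_nat])
    thus ?thesis by (metis prod.inject)
  qed
  have "\<phi> i = \<psi> i" for i
  proof -
    have "enc (\<phi> i) = enc (\<psi> i)"
    proof
      fix q show "enc (\<phi> i) q = enc (\<psi> i) q" using F[of "i # q"] by (simp add: Fenc_def)
    qed
    thus ?thesis by (rule enc_inj)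
  qed
  thus "\<phi> = \<psi>" by auto
qed

lemma code_inj_real: "\<exists>ei :: (nat \<Rightarrow> bc) \<Rightarrow> real. inj ei"
proof -
  obtain h :: "nat set \<Rightarrow> real" where "bij h"
    using nat_sets_eqpoll_reals by (auto simp: eqpoll_def)
  hence "inj (h \<circ> encs)" using encs_inj bij_is_inj inj_compose by blast
  thus ?thesis by blast
qed


lemma notunderS: "t \<notin> underS wr s \<Longrightarrow> (s,t) \<in> wr"
  using wr_total wr_refl by (auto simp: underS_wr_iff)

theorem theorem2p6:
  fixes K :: "'k set" and N :: "'k \<Rightarrow> real set"
  assumes "\<forall>\<zeta>\<in>K. eqpoll (N \<zeta>) (UNIV :: real set)"
    and "\<forall>\<zeta>\<in>K. \<forall>\<eta>\<in>K. \<zeta> \<noteq> \<eta> \<longrightarrow> lesspoll (N \<zeta> \<inter> N \<eta>) (UNIV :: real set)"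
  shows "strongly_algebrable SZ K"
proof -
  have "\<forall>\<zeta>\<in>K. \<exists>g::real\<Rightarrow>real. inj g \<and> range g \<subseteq> N \<zeta>"
  proof
    fix \<zeta> assume "\<zeta> \<in> K"
    then obtain f where "bij_betw f (N \<zeta>) (UNIV::real set)" using assms(1) by (auto simp: eqpoll_def)
    hence "bij_betw (inv_into (N \<zeta>) f) UNIV (N \<zeta>)" by (rule bij_betw_inv_into)
    thus "\<exists>g::real\<Rightarrow>real. inj g \<and> range g \<subseteq> N \<zeta>" by (auto simp: bij_betw_def)
  qed
  then obtain h :: "'k \<Rightarrow> real \<Rightarrow> real" where h: "\<And>\<zeta>. \<zeta> \<in> K \<Longrightarrow> inj (h \<zeta>) \<and> range (h \<zeta>) \<subseteq> N \<zeta>"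
    by metis
  have hsmall: "small {t. h a t = h b t}" if "a \<in> K" "b \<in> K" "a \<noteq> b" for a b
  proof -
    have "|{t. h a t = h b t}| \<le>o |N a \<inter> N b|"
      unfolding card_of_ordLeq[symmetric]
    proof (rule exI[of _ "h a"], rule conjI)
      show "inj_on (h a) {t. h a t = h b t}" using h[OF that(1)] inj_on_subset by blast
      show "h a ` {t. h a t = h b t} \<subseteq> N a \<inter> N b"
      proof
        fix y assume "y \<in> h a ` {t. h a t = h b t}"
        then obtain s where s: "h a s = h b s" "y = h a s" by blast
        show "y \<in> N a \<inter> N b" using s h[OF that(1)] h[OF that(2)] by (metis IntI rangeI subsetD)
      qed
    qed
    moreover have "small (N a \<inter> N b)" using assms(2) that lesspoll_small by blast
    ultimately show ?thesis using ordLeq_ordLess_trans by blast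
  qed
  obtain ei :: "(nat \<Rightarrow> bc) \<Rightarrow> real" where ei: "inj ei" using code_inj_real by blast
  define eg where "eg s = gcode (inv ei s)" for s
  define E where "E t = (\<lambda>s. eg s t) ` under wr t \<union> under wr t" for t
  have smallE: "small (E t)" for t
    unfolding E_def by (rule small_Un[OF small_image_gen[OF small_under] small_under])
  define \<Phi> where "\<Phi> t = PhiC (E t)" for t
  have T: "\<Phi> t y \<notin> roots_in (Rg (E t \<union> \<Phi> t ` underS wr y))" for t y
    unfolding \<Phi>_def by (rule PhiC_T[OF smallE])
  define x where "x \<zeta> t = \<Phi> t (h \<zeta> t)" for \<zeta> t
  have SZc: "eval_poly x c \<in> SZ" if cP: "c \<in> polys K" and cnz: "c \<noteq> (\<lambda>_. 0)" for c
  proof -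
    have "eval_poly x c \<notin> measurable (restrict_space borel Z) borel" if Z: "Z \<approx> (UNIV::real set)" for Z
    proof
      assume meas: "eval_poly x c \<in> measurable (restrict_space borel Z) borel"
      obtain \<phi> where \<phi>: "\<forall>t\<in>Z. eval_poly x c t = gcode \<phi> t" using extend[OF meas] by blast
      define s0 where "s0 = ei \<phi>"
      have egs0: "eg s0 = gcode \<phi>" by (simp add: eg_def s0_def ei)
      define S where "S = {m. c m \<noteq> 0}"
      have fS: "finite S" and SM: "S \<subseteq> monomials K" using cP by (auto simp: polys_def S_def)
      obtain m1 where m1: "m1 \<in> S" using cnz by (auto simp: S_def)
      define V where "V = (\<Union>m\<in>S. {a. m a \<noteq> 0})"
      have fV: "finite V" using fS SM by (auto simp: V_def monomials_def)
      have VK: "V \<subseteq> K" using SM by (auto simp: V_def monomials_def)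
      define B1 where "B1 = (\<Union>a\<in>V. \<Union>b\<in>V - {a}. {t. h a t = h b t})"
      define B2 where "B2 = underS wr s0 \<union> (\<Union>m\<in>S. underS wr (c m))"
      have "small B1" unfolding B1_def
        using fV VK hsmall by (intro small_UN_finite) auto
      moreover have "small B2" unfolding B2_def
        using fS by (intro small_Un small_underS small_UN_finite) auto
      ultimately have "small (B1 \<union> B2)" by (rule small_Un)
      then obtain t where t: "t \<in> Z" "t \<notin> B1 \<union> B2" using small_not_all[OF _ Z] by blast
      have s0t: "(s0, t) \<in> wr" using t by (auto simp: B2_def intro: notunderS)
      have cmt: "(c m, t) \<in> wr" if "m \<in> S" for m using t that by (auto simp: B2_def intro: notunderS)
      have gE: "gcode \<phi> t \<in> E t" using s0t egs0 by (auto simp: E_def under_def intro!: image_eqI[of _ _ s0])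
      have cE: "c m \<in> E t" if "m \<in> S" for m using cmt[OF that] by (auto simp: E_def under_def)
      have injV: "inj_on (\<lambda>a. h a t) V" using t by (auto simp: B1_def inj_on_def)
      define z0 :: "'k \<Rightarrow> nat" where "z0 = (\<lambda>_. 0)"
      have z0S: "z0 \<notin> S" using SM by (auto simp: monomials_def z0_def)
      define c' where "c' = c(z0 := - gcode \<phi> t)"
      have mono_eq: "(\<Prod>b\<in>V. \<Phi> t (h b t) ^ m b) = eval_mono x m t" if "m \<in> S" for m
      proof -
        have sub: "{a. m a \<noteq> 0} \<subseteq> V" using that by (auto simp: V_def)
        show ?thesis unfolding eval_mono_def x_def
          by (rule prod.mono_neutral_left[OF fV sub, symmetric]) auto
      qed
      have "(\<Sum>m\<in>insert z0 S. c' m * (\<Prod>b\<in>V. \<Phi> t (h b t) ^ m b))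
          = - gcode \<phi> t + (\<Sum>m\<in>S. c m * eval_mono x m t)"
      proof -
        have s1: "(\<Sum>m\<in>S. c' m * (\<Prod>b\<in>V. \<Phi> t (h b t) ^ m b)) = (\<Sum>m\<in>S. c m * eval_mono x m t)"
          by (intro sum.cong refl) (use z0S in \<open>auto simp: c'_def mono_eq\<close>)
        have cz: "c' z0 = - gcode \<phi> t" by (simp add: c'_def)
        have pz: "(\<Prod>b\<in>V. \<Phi> t (h b t) ^ z0 b) = 1" by (simp add: z0_def)
        show ?thesis by (subst sum.insert[OF fS z0S]) (simp add: s1 cz pz)
      qed
      also have "(\<Sum>m\<in>S. c m * eval_mono x m t) = eval_poly x c t"
        by (simp add: eval_poly_def S_def)
      also have "\<dots> = gcode \<phi> t" using \<phi> t by blast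
      finally have sum0: "(\<Sum>m\<in>insert z0 S. c' m * (\<Prod>b\<in>V. \<Phi> t (h b t) ^ m b)) = 0" by simp
      have supp: "\<forall>m\<in>insert z0 S. \<forall>b. m b \<noteq> 0 \<longrightarrow> b \<in> V" by (auto simp: V_def z0_def)
      have cR: "\<forall>m\<in>insert z0 S. c' m \<in> Rg (E t)"
        using gE cE z0S by (auto simp: c'_def intro: Rg_base Rg_uminus)
      have "\<forall>m\<in>insert z0 S. c' m = 0"
        by (rule crux[OF T fV injV _ supp cR sum0]) (use fS in simp)
      hence "c m1 = 0" using m1 z0S by (auto simp: c'_def split: if_splits)
      thus False using m1 by (simp add: S_def)
    qed
    thus ?thesis by (simp add: SZ_def)
  qed
  have nz: "eval_poly x c \<noteq> (\<lambda>_. 0)" if "c \<in> polys K" "c \<noteq> (\<lambda>_. 0)" for c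
  proof
    assume e: "eval_poly x c = (\<lambda>_. 0)"
    have "(\<lambda>_. 0::real) \<in> measurable (restrict_space borel (UNIV::real set)) borel" by simp
    thus False using SZc[OF that] e by (auto simp: SZ_def)
  qed
  have injx: "inj_on x K"
  proof (rule inj_onI, rule ccontr)
    fix a b assume a: "a \<in> K" and b: "b \<in> K" and xab: "x a = x b" and ab: "a \<noteq> b"
    define \<delta> :: "'k \<Rightarrow> 'k \<Rightarrow> nat" where "\<delta> z = (\<lambda>w. if w = z then 1 else 0)" for z
    have dab: "\<delta> a \<noteq> \<delta> b" using ab by (auto simp: \<delta>_def fun_eq_iff)
    define cp where "cp m = (if m = \<delta> a then 1 else if m = \<delta> b then -1 else (0::real))" for m
    have Scp: "{m. cp m \<noteq> 0} = {\<delta> a, \<delta> b}" using dab by (auto simp: cp_def)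
    have supd: "{w. \<delta> z w \<noteq> 0} = {z}" for z by (auto simp: \<delta>_def)
    have dmono: "\<delta> z \<in> monomials K" if "z \<in> K" for z
      using that by (auto simp: monomials_def supd fun_eq_iff \<delta>_def)
    have cpP: "cp \<in> polys K" using dmono a b by (simp add: polys_def Scp)
    have cpnz: "cp \<noteq> (\<lambda>_. 0)" by (auto simp: cp_def fun_eq_iff)
    have em: "eval_mono x (\<delta> z) t = x z t" for z t by (simp add: eval_mono_def supd \<delta>_def)
    have cpa: "cp (\<delta> a) = 1" by (simp add: cp_def)
    have cpb: "cp (\<delta> b) = -1" using dab by (simp add: cp_def)
    have ev: "eval_poly x cp t = x a t - x b t" for t
      using dab by (simp add: eval_poly_def Scp em cpa cpb)
    have "eval_poly x cp = (\<lambda>t. x a t - x b t)" using ev by blast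
    hence "eval_poly x cp = (\<lambda>_. 0)" using xab by simp
    thus False using nz[OF cpP cpnz] by simp
  qed
  show ?thesis unfolding strongly_algebrable_def
    using injx nz SZc by blast
qed

end
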